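(* If the knowledge connectivity graph satisfies the requirements of the BFT-CUPFT model, then the Core algorithm executed by any correct process eventually terminates.
   Context: BFT-CUPFT model: finite set $\Pi$ of processes, partially synchronous, Byzantine set $F$ with $|F|\le f$ where $f$ is unknown to the processes, reliable authenticated channels, unforgeable signatures ($\langle m\rangle_i$ = $m$ signed by $i$); each process $i$ is given only its participant detector $PD_i\subseteq\Pi$ and may only message processes it currently knows. Knowledge connectivity graph $G_{di}=(\Pi,\{(i,j):j\in PD_i\})$; $G_{safe}=G_{di}[\Pi\setminus F]$. $\kappa(H)$: largest $k$ such that all ordered pairs of distinct vertices are joined by $k$ node-disjoint paths. $A\xRightarrow{\le y}B$ / $A\xRightarrow{>y}B$: the maximum number of node-disjoint paths from $A$ to $B$ is $\le y$ / $>y$. $k$-OSR PD: underlying undirected graph connected, exactly one sink component $G_{sink}=(V_{sink},E_{sink})$ in the condensation, $G_{sink}$ $k$-strongly connected, every vertex outside $V_{sink}$ has $k$ node-disjoint paths to every vertex of $V_{sink}$. Extended $k$-OSR PD: $k$-OSR PD and there is $y\ge0$ such that exactly one $P\subseteq V_{sink}$ (the core) has $\kappa(P)\ge y+1$ and $P\xRightarrow{\le y}T$ for all nonempty $T\subseteq\Pi\setminus P$. Requirements of BFT-CUPFT: $G_{safe}$ in extended $(f+1)$-OSR PD, and its sink and its core each have at least $2f+1$ processes. Discovery algorithm at $i$: sets $\mathcal{S}_{PD}=\{\langle i,PD_i\rangle_i\}$, $\mathcal{S}_{known}=PD_i\cup\{i\}$, $\mathcal{S}_{received}=\{i\}$;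 periodically send $\textsc{GetPDs}$ to all of $\mathcal{S}_{known}$; answer $\textsc{GetPDs}$ with $\langle\textsc{SetPDs},\mathcal{S}_{PD}\rangle$; on $\langle\textsc{SetPDs},pds_j\rangle$ from $j$ containing a valid $\langle j,PD_j\rangle_j$, merge $pds_j$ into $\mathcal{S}_{PD}$, add all processes listed in the signed PDs to $\mathcal{S}_{known}$, and all signers to $\mathcal{S}_{received}$. Core algorithm at $i$: start Discovery concurrently; wait until there are an integer $y\ge0$ and $R\subseteq\mathcal{S}_{received}$ such that, in the graph built from the PDs in $\mathcal{S}_{PD}$, $\kappa(R)\ge y+1$ and every $K\subseteq(\mathcal{S}_{known}\cup\mathcal{S}_{received})\setminus R$ with $R\xRightarrow{>y}K$ has $|K|\le y$; then return $K\cup R$ if some such $K$ with $R\xRightarrow{>y}K$ exists, and $R$ otherwise. *)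

theory Defs
  imports Main
begin

text \<open>Since all vertices are
required to lie in V, a path in (V,E) is a path of the induced subgraph on V.\<close>
definition is_path :: "'p set \<Rightarrow> ('p \<times> 'p) set \<Rightarrow> 'p list \<Rightarrow> bool" where
  "is_path V E xs \<longleftrightarrow> xs \<noteq> [] \<and> distinct xs \<and> set xs \<subseteq> V \<and>
     (\<forall>n. Suc n < length xs \<longrightarrow> (xs ! n, xs ! Suc n) \<in> E)"

definition disj_paths_uv :: "'p set \<Rightarrow> ('p \<times> 'p) set \<Rightarrow> 'p \<Rightarrow> 'p \<Rightarrow> nat \<Rightarrow> bool" where
  "disj_paths_uv V E u v k \<longleftrightarrow> (\<exists>Ps. finite Ps \<and> card Ps = k \<and>
     (\<forall>p\<in>Ps. is_path V E p \<and> hd p = u \<and> last p = v) \<and>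
     (\<forall>p\<in>Ps. \<forall>q\<in>Ps. p \<noteq> q \<longrightarrow> set p \<inter> set q \<subseteq> {u, v}))"

text \<open>kappa(V,E) >= k: all ordered pairs of distinct vertices are joined by k
node-disjoint paths (with the standard convention kappa(H) <= |V(H)| - 1,
so that e.g. kappa(K_1) = 0).\<close>
definition kappa_ge :: "'p set \<Rightarrow> ('p \<times> 'p) set \<Rightarrow> nat \<Rightarrow> bool" where
  "kappa_ge V E k \<longleftrightarrow> finite V \<and> k + 1 \<le> card V \<and>
     (\<forall>u\<in>V. \<forall>v\<in>V. u \<noteq> v \<longrightarrow> disj_paths_uv V E u v k)"

definition conn_gt :: "'p set \<Rightarrow> ('p \<times> 'p) set \<Rightarrow> 'p set \<Rightarrow> 'p set \<Rightarrow> nat \<Rightarrow> bool" where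
  "conn_gt V E A B y \<longleftrightarrow> (\<exists>Ps. finite Ps \<and> card Ps = y + 1 \<and>
     (\<forall>p\<in>Ps. is_path V E p \<and> hd p \<in> A \<and> last p \<in> B) \<and>
     (\<forall>p\<in>Ps. \<forall>q\<in>Ps. p \<noteq> q \<longrightarrow> set p \<inter> set q = {}))"

definition reach :: "'p set \<Rightarrow> ('p \<times> 'p) set \<Rightarrow> ('p \<times> 'p) set" where
  "reach V E = (E \<inter> (V \<times> V))\<^sup>*"

definition undirected_connected :: "'p set \<Rightarrow> ('p \<times> 'p) set \<Rightarrow> bool" where
  "undirected_connected V E \<longleftrightarrow>
     (\<forall>u\<in>V. \<forall>v\<in>V. (u, v) \<in> ((E \<union> E\<inverse>) \<inter> (V \<times> V))\<^sup>*)"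

definition scc :: "'p set \<Rightarrow> ('p \<times> 'p) set \<Rightarrow> 'p set \<Rightarrow> bool" where
  "scc V E C \<longleftrightarrow> C \<noteq> {} \<and> C \<subseteq> V \<and>
     (\<forall>u\<in>C. \<forall>v\<in>C. (u, v) \<in> reach V E) \<and>
     (\<forall>u\<in>C. \<forall>v\<in>V. (u, v) \<in> reach V E \<and> (v, u) \<in> reach V E \<longrightarrow> v \<in> C)"

definition sink_comp :: "'p set \<Rightarrow> ('p \<times> 'p) set \<Rightarrow> 'p set \<Rightarrow> bool" where
  "sink_comp V E C \<longleftrightarrow> scc V E C \<and> (\<forall>u\<in>C. \<forall>v\<in>V - C. (u, v) \<notin> E)"

definition k_osr :: "'p set \<Rightarrow> ('p \<times> 'p) set \<Rightarrow> nat \<Rightarrow> bool" where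
  "k_osr V E k \<longleftrightarrow> undirected_connected V E \<and> (\<exists>!C. sink_comp V E C) \<and>
     (\<forall>C. sink_comp V E C \<longrightarrow> kappa_ge C E k \<and>
        (\<forall>u\<in>V - C. \<forall>w\<in>C. disj_paths_uv V E u w k))"

definition core_cand :: "'p set \<Rightarrow> ('p \<times> 'p) set \<Rightarrow> 'p set \<Rightarrow> nat \<Rightarrow> 'p set \<Rightarrow> bool" where
  "core_cand V E Vs y P \<longleftrightarrow> P \<subseteq> Vs \<and> kappa_ge P E (y + 1) \<and>
     (\<forall>T. T \<noteq> {} \<and> T \<subseteq> V - P \<longrightarrow> \<not> conn_gt V E P T y)"

definition ext_k_osr :: "'p set \<Rightarrow> ('p \<times> 'p) set \<Rightarrow> nat \<Rightarrow> bool" where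
  "ext_k_osr V E k \<longleftrightarrow> k_osr V E k \<and>
     (\<forall>Vs. sink_comp V E Vs \<longrightarrow> (\<exists>y. \<exists>!P. core_cand V E Vs y P))"

text \<open>Processes form the finite type 'p (Pi = UNIV).  Knowledge connectivity graph and G_safe.\<close>
definition G_di_edges :: "('p \<Rightarrow> 'p set) \<Rightarrow> ('p \<times> 'p) set" where
  "G_di_edges PD = {(a, b). b \<in> PD a}"

definition safe_V :: "'p set \<Rightarrow> 'p set" where
  "safe_V F = UNIV - F"

definition safe_E :: "('p \<Rightarrow> 'p set) \<Rightarrow> 'p set \<Rightarrow> ('p \<times> 'p) set" where
  "safe_E PD F = G_di_edges PD \<inter> (safe_V F \<times> safe_V F)"

definition bft_cupft_requirements :: "('p \<Rightarrow> 'p set) \<Rightarrow> 'p set \<Rightarrow> nat \<Rightarrow> bool" where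
  "bft_cupft_requirements PD F f \<longleftrightarrow>
     ext_k_osr (safe_V F) (safe_E PD F) (f + 1) \<and>
     (\<exists>Vs y P. sink_comp (safe_V F) (safe_E PD F) Vs \<and>
        core_cand (safe_V F) (safe_E PD F) Vs y P \<and>
        (\<forall>P'. core_cand (safe_V F) (safe_E PD F) Vs y P' \<longrightarrow> P' = P) \<and>
        2 * f + 1 \<le> card Vs \<and> 2 * f + 1 \<le> card P)"

text \<open>A signed PD <j, S>_j is modelled as the pair (j, S).  SPD i t is the set S_PD of
(correct) process i at time t.  The sets S_known and S_received are functions of it.\<close>
definition S_known :: "('p \<Rightarrow> 'p set) \<Rightarrow> 'p \<Rightarrow> ('p \<times> 'p set) set \<Rightarrow> 'p set" where
  "S_known PD i X = insert i (PD i \<union> \<Union> (snd ` X))"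

definition S_received :: "'p \<Rightarrow> ('p \<times> 'p set) set \<Rightarrow> 'p set" where
  "S_received i X = insert i (fst ` X)"

text \<open>Content M of a SetPDs message from j, received when the receiver is at time t:
it contains a signed PD of j; a correct j sends its own S_PD of some earlier time;
a Byzantine j may send anything, except that signatures of correct processes cannot be
forged (so a signed PD of a correct k is the true PD_k).\<close>
definition valid_msg ::
  "('p \<Rightarrow> 'p set) \<Rightarrow> 'p set \<Rightarrow> ('p \<Rightarrow> nat \<Rightarrow> ('p \<times> 'p set) set) \<Rightarrow> 'p \<Rightarrow> nat \<Rightarrow> ('p \<times> 'p set) set \<Rightarrow> bool" where
  "valid_msg PD F SPD j t M \<longleftrightarrow> (\<exists>S. (j, S) \<in> M) \<and>
     (j \<notin> F \<longrightarrow> (\<exists>t'\<le>t. M = SPD j t')) \<and>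
     (j \<in> F \<longrightarrow> (\<forall>k S. (k, S) \<in> M \<and> k \<notin> F \<longrightarrow> S = PD k))"

text \<open>Admissible executions of Discovery at the correct processes: initial state, each step
merges at most one received SetPDs message, and (reliable channels, partial synchrony,
periodic GetPDs to every known process, replies by correct processes) every correct
process eventually merges the state of every correct process it knows.\<close>
definition discovery_execution ::
  "('p \<Rightarrow> 'p set) \<Rightarrow> 'p set \<Rightarrow> ('p \<Rightarrow> nat \<Rightarrow> ('p \<times> 'p set) set) \<Rightarrow> bool" where
  "discovery_execution PD F SPD \<longleftrightarrow>
     (\<forall>i. i \<notin> F \<longrightarrow> SPD i 0 = {(i, PD i)}) \<and>
     (\<forall>i t. i \<notin> F \<longrightarrow> SPD i (Suc t) = SPD i t \<or>
        (\<exists>j M. valid_msg PD F SPD j t M \<and> SPD i (Suc t) = SPD i t \<union> M)) \<and>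
     (\<forall>i j t. i \<notin> F \<longrightarrow> j \<notin> F \<longrightarrow> j \<in> S_known PD i (SPD i t) \<longrightarrow>
        (\<exists>t'\<ge>t. SPD j t \<subseteq> SPD i t'))"

definition local_E :: "('p \<times> 'p set) set \<Rightarrow> ('p \<times> 'p) set" where
  "local_E X = {(a, b). \<exists>S. (a, S) \<in> X \<and> b \<in> S}"

definition core_wait_cond :: "('p \<Rightarrow> 'p set) \<Rightarrow> 'p \<Rightarrow> ('p \<times> 'p set) set \<Rightarrow> bool" where
  "core_wait_cond PD i X \<longleftrightarrow>
     (let Vl = S_known PD i X \<union> S_received i X; El = local_E X in
      \<exists>(y::nat) R. R \<subseteq> S_received i X \<and> kappa_ge R El (y + 1) \<and>
        (\<forall>K. K \<subseteq> Vl - R \<and> conn_gt Vl El R K y \<longrightarrow> card K \<le> y))"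

end

theory Submission
  imports Defs
begin

lemma path_rtrancl: "is_path V E p \<Longrightarrow> (hd p, last p) \<in> E\<^sup>*"
proof (induction p)
  case Nil then show ?case by (simp add: is_path_def)
next
  case (Cons x ys)
  show ?case
  proof (cases ys)
    case Nil then show ?thesis by simp
  next
    case (Cons z zs)
    have "is_path V E ys"
      unfolding is_path_def
    proof (intro conjI allI impI)
      show "ys \<noteq> []" using Cons by simp
      show "distinct ys" "set ys \<subseteq> V" using Cons.prems unfolding is_path_def by auto
      fix n assume "Suc n < length ys"
      then have "Suc (Suc n) < length (x # ys)" by simp
      then have "((x#ys) ! Suc n, (x#ys) ! Suc (Suc n)) \<in> E"
        using Cons.prems unfolding is_path_def by blast
      then show "(ys ! n, ys ! Suc n) \<in> E" by simp
    qed
    then have "(hd ys, last ys) \<in> E\<^sup>*" by (rule Cons.IH)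
    moreover have "(x, hd ys) \<in> E"
    proof -
      have "Suc 0 < length (x # ys)" using Cons by simp
      then have "((x#ys) ! 0, (x#ys) ! Suc 0) \<in> E" using Cons.prems unfolding is_path_def by blast
      then show ?thesis using Cons by simp
    qed
    ultimately show ?thesis using Cons by (simp add: converse_rtrancl_into_rtrancl)
  qed
qed

lemma crossing: "xs \<noteq> [] \<Longrightarrow> hd xs \<in> A \<Longrightarrow> last xs \<notin> A \<Longrightarrow>
   \<exists>n. Suc n < length xs \<and> xs!n \<in> A \<and> xs!Suc n \<notin> A"
proof (induction xs)
  case Nil then show ?case by simp
next
  case (Cons x ys)
  show ?case
  proof (cases ys)
    case Nil then show ?thesis using Cons.prems by simp
  next
    case (Cons z zs)
    show ?thesis
    proof (cases "hd ys \<in> A")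
      case True
      then obtain n where "Suc n < length ys" "ys!n \<in> A" "ys!Suc n \<notin> A"
        using Cons.IH Cons.prems Cons by auto
      then show ?thesis by (intro exI[of _ "Suc n"]) auto
    next
      case False
      then show ?thesis using Cons.prems Cons by (intro exI[of _ 0]) auto
    qed
  qed
qed

lemma path_mono: "is_path V E p \<Longrightarrow> E \<inter> (V \<times> V) \<subseteq> E' \<Longrightarrow> is_path V E' p"
  unfolding is_path_def
proof (elim conjE, intro conjI allI impI)
  fix n assume a: "set p \<subseteq> V" "\<forall>n. Suc n < length p \<longrightarrow> (p ! n, p ! Suc n) \<in> E"
    "E \<inter> V \<times> V \<subseteq> E'" "Suc n < length p"
  then have "p ! n \<in> V" "p ! Suc n \<in> V" by (auto dest: Suc_lessD intro!: subsetD[OF a(1)] nth_mem)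
  then show "(p ! n, p ! Suc n) \<in> E'" using a by blast
qed

lemma kappa_mono: assumes "kappa_ge V E k" "E \<inter> (V \<times> V) \<subseteq> E'" shows "kappa_ge V E' k"
proof -
  have "disj_paths_uv V E' u v k" if "disj_paths_uv V E u v k" for u v
  proof -
    from that[unfolded disj_paths_uv_def] obtain Ps where P: "finite Ps \<and> card Ps = k \<and>
     (\<forall>p\<in>Ps. is_path V E p \<and> hd p = u \<and> last p = v) \<and>
     (\<forall>p\<in>Ps. \<forall>q\<in>Ps. p \<noteq> q \<longrightarrow> set p \<inter> set q \<subseteq> {u, v})" ..
    have "\<forall>p\<in>Ps. is_path V E' p" using P path_mono[OF _ assms(2)] by simp
    then show ?thesis unfolding disj_paths_uv_def using P by (intro exI[of _ Ps]) simp
  qed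
  then show ?thesis using assms(1) unfolding kappa_ge_def by simp
qed

lemma finite_max_time:
  fixes P :: "'a \<Rightarrow> nat \<Rightarrow> bool"
  assumes "finite A" "\<forall>w\<in>A. \<exists>t. P w t" "\<And>w t t'. P w t \<Longrightarrow> t \<le> t' \<Longrightarrow> P w t'"
  shows "\<exists>t. \<forall>w\<in>A. P w t"
  using assms(1,2)
proof (induction A rule: finite_induct)
  case empty then show ?case by simp
next
  case (insert x A)
  then obtain t1 where t1: "\<forall>w\<in>A. P w t1" by auto
  obtain t2 where t2: "P x t2" using insert.prems by auto
  have "\<forall>w\<in>A. P w (max t1 t2)" using t1 assms(3) by (meson max.cobounded1)
  moreover have "P x (max t1 t2)" using t2 assms(3) by (meson max.cobounded2)
  ultimately show ?case by blast
qed

theorem theorem10: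
  fixes PD :: "'p::finite \<Rightarrow> 'p set" and F :: "'p set" and f :: nat
    and SPD :: "'p \<Rightarrow> nat \<Rightarrow> ('p \<times> 'p set) set" and i :: 'p
  assumes "card F \<le> f"
    and "bft_cupft_requirements PD F f"
    and "discovery_execution PD F SPD"
    and "i \<notin> F"
  shows "\<exists>t. core_wait_cond PD i (SPD i t)"
proof -
  let ?V = "safe_V F" and ?E = "safe_E PD F"
  have init: "\<And>j. j \<notin> F \<Longrightarrow> SPD j 0 = {(j, PD j)}"
    and step: "\<And>j t. j \<notin> F \<Longrightarrow> SPD j (Suc t) = SPD j t \<or>
        (\<exists>j' M. valid_msg PD F SPD j' t M \<and> SPD j (Suc t) = SPD j t \<union> M)"
    and fair: "\<And>j k t. j \<notin> F \<Longrightarrow> k \<notin> F \<Longrightarrow> k \<in> S_known PD j (SPD j t) \<Longrightarrow>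
        (\<exists>t'\<ge>t. SPD k t \<subseteq> SPD j t')"
    using assms(3) unfolding discovery_execution_def by blast+
  have mono1: "\<And>j t. j \<notin> F \<Longrightarrow> SPD j t \<subseteq> SPD j (Suc t)"
    using step by blast
  have mono: "\<And>j t t'. j \<notin> F \<Longrightarrow> t \<le> t' \<Longrightarrow> SPD j t \<subseteq> SPD j t'"
  proof -
    fix j and t t' :: nat assume j: "j \<notin> F" and "t \<le> t'"
    from \<open>t \<le> t'\<close> show "SPD j t \<subseteq> SPD j t'"
    proof (induction t' rule: dec_induct)
      case base then show ?case by simp
    next
      case (step n) then show ?case using mono1[OF j, of n] by blast
    qed
  qed
  \<comment> \<open>unforgeability invariant\<close>
  have inv0: "\<forall>s\<le>t. \<forall>j k S. j \<notin> F \<longrightarrow> (k, S) \<in> SPD j s \<longrightarrow> k \<notin> F \<longrightarrow> S = PD k" for t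
  proof (induction t)
    case 0 then show ?case using init by auto
  next
    case (Suc t)
    have "\<forall>j k S. j \<notin> F \<longrightarrow> (k, S) \<in> SPD j (Suc t) \<longrightarrow> k \<notin> F \<longrightarrow> S = PD k"
    proof (intro allI impI)
      fix j k S assume j: "j \<notin> F" and kS: "(k, S) \<in> SPD j (Suc t)" and k: "k \<notin> F"
      from step[OF j] show "S = PD k"
      proof
        assume "SPD j (Suc t) = SPD j t" then show ?thesis using Suc.IH j kS k by auto
      next
        assume "\<exists>j' M. valid_msg PD F SPD j' t M \<and> SPD j (Suc t) = SPD j t \<union> M"
        then obtain j' M where vm: "valid_msg PD F SPD j' t M" and eq: "SPD j (Suc t) = SPD j t \<union> M"
          by blast
        show ?thesis
        proof (cases "(k, S) \<in> SPD j t")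
          case True then show ?thesis using Suc.IH j k by auto
        next
          case False
          then have M: "(k, S) \<in> M" using kS eq by auto
          show ?thesis
          proof (cases "j' \<in> F")
            case True then show ?thesis using vm M k unfolding valid_msg_def by blast
          next
            case False
            then obtain t' where "t' \<le> t" "M = SPD j' t'" using vm unfolding valid_msg_def by blast
            then show ?thesis using Suc.IH False M k by auto
          qed
        qed
      qed
    qed
    then show ?case using Suc.IH le_Suc_eq by auto
  qed
  have inv: "\<And>j s k S. j \<notin> F \<Longrightarrow> (k, S) \<in> SPD j s \<Longrightarrow> k \<notin> F \<Longrightarrow> S = PD k"
    using inv0 by blast
  obtain Vs where sink: "sink_comp ?V ?E Vs"
    using assms(2) unfolding bft_cupft_requirements_def by blast
  have osr: "k_osr ?V ?E (f + 1)"
  proof -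
    have "ext_k_osr ?V ?E (f + 1)" using assms(2) unfolding bft_cupft_requirements_def by (rule conjunct1)
    then show ?thesis unfolding ext_k_osr_def by (rule conjunct1)
  qed
  have kap: "kappa_ge Vs ?E (f + 1)"
    and outp: "\<forall>u\<in>?V - Vs. \<forall>w\<in>Vs. disj_paths_uv ?V ?E u w (f + 1)"
    using osr sink unfolding k_osr_def by blast+
  have VsV: "Vs \<subseteq> ?V" using sink unfolding sink_comp_def scc_def by blast
  have Vcorr: "\<And>x. x \<in> ?V \<Longrightarrow> x \<notin> F" by (simp add: safe_V_def)
  have iV: "i \<in> ?V" using assms(4) by (simp add: safe_V_def)
  have reach_i: "(i, w) \<in> ?E\<^sup>*" if w: "w \<in> Vs" for w
  proof (cases "i \<in> Vs")
    case True
    then have "(i, w) \<in> reach ?V ?E" using sink w unfolding sink_comp_def scc_def by blast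
    then show ?thesis unfolding reach_def by (meson inf_le1 rtrancl_mono subsetD)
  next
    case False
    then have "disj_paths_uv ?V ?E i w (f + 1)" using outp iV w by blast
    then obtain Ps where P: "finite Ps \<and> card Ps = f + 1 \<and>
     (\<forall>p\<in>Ps. is_path ?V ?E p \<and> hd p = i \<and> last p = w) \<and>
     (\<forall>p\<in>Ps. \<forall>q\<in>Ps. p \<noteq> q \<longrightarrow> set p \<inter> set q \<subseteq> {i, w})"
      unfolding disj_paths_uv_def ..
    then have "Ps \<noteq> {}" by auto
    then obtain p where p: "p \<in> Ps" by auto
    then have "is_path ?V ?E p" "hd p = i" "last p = w" using P by auto
    then show ?thesis using path_rtrancl by metis
  qed
  have propag: "\<exists>t. SPD w 0 \<subseteq> SPD j t" if "(j, w) \<in> ?E\<^sup>*" "j \<notin> F" for j w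
    using that
  proof (induction rule: converse_rtrancl_induct)
    case base then show ?case by blast
  next
    case (step j k)
    have jk: "k \<in> PD j" "k \<notin> F" using step.hyps(1)
      unfolding safe_E_def G_di_edges_def safe_V_def by auto
    then obtain t where t: "SPD w 0 \<subseteq> SPD k t" using step.IH by blast
    have "k \<in> S_known PD j (SPD j t)" using jk unfolding S_known_def by blast
    then obtain t' where "SPD k t \<subseteq> SPD j t'" using fair step.prems jk by blast
    then show ?case using t by blast
  qed
  have "\<forall>w\<in>Vs. \<exists>t. SPD w 0 \<subseteq> SPD i t"
    using propag reach_i assms(4) by blast
  then obtain t where t: "\<forall>w\<in>Vs. SPD w 0 \<subseteq> SPD i t"
    using finite_max_time[of Vs "\<lambda>w t. SPD w 0 \<subseteq> SPD i t"] mono[OF assms(4)]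
    by (meson finite order_trans)
  define X where "X = SPD i t"
  have inX: "\<And>w. w \<in> Vs \<Longrightarrow> (w, PD w) \<in> X"
    using t init VsV Vcorr unfolding X_def by blast
  have Rrec: "Vs \<subseteq> S_received i X"
    using inX unfolding S_received_def by force
  have Esub: "?E \<inter> (Vs \<times> Vs) \<subseteq> local_E X"
    using inX unfolding safe_E_def G_di_edges_def local_E_def by blast
  have kapL: "kappa_ge Vs (local_E X) (f + 1)"
    using kap Esub kappa_mono by blast
  let ?Vl = "S_known PD i X \<union> S_received i X"
  have noconn: "\<not> conn_gt ?Vl (local_E X) Vs K f" if K: "K \<subseteq> ?Vl - Vs" for K
  proof
    assume "conn_gt ?Vl (local_E X) Vs K f"
    then obtain Ps where P: "finite Ps \<and> card Ps = f + 1 \<and>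
       (\<forall>p\<in>Ps. is_path ?Vl (local_E X) p \<and> hd p \<in> Vs \<and> last p \<in> K) \<and>
       (\<forall>p\<in>Ps. \<forall>q\<in>Ps. p \<noteq> q \<longrightarrow> set p \<inter> set q = {})"
      unfolding conn_gt_def ..
    then have fin: "finite Ps" and cP: "card Ps = f + 1"
      and pth: "\<forall>p\<in>Ps. is_path ?Vl (local_E X) p \<and> hd p \<in> Vs \<and> last p \<in> K"
      and dj: "\<forall>p\<in>Ps. \<forall>q\<in>Ps. p \<noteq> q \<longrightarrow> set p \<inter> set q = {}"
      by auto
    have ex: "\<exists>b. b \<in> set p \<and> b \<in> F" if p: "p \<in> Ps" for p
    proof -
      have ip: "is_path ?Vl (local_E X) p" "hd p \<in> Vs" "last p \<notin> Vs"
        using pth p K by auto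
      then obtain n where n: "Suc n < length p" "p!n \<in> Vs" "p!Suc n \<notin> Vs"
        using crossing[of p Vs] unfolding is_path_def by blast
      then have "(p!n, p!Suc n) \<in> local_E X" using ip unfolding is_path_def by blast
      then obtain S where S: "(p!n, S) \<in> X" "p!Suc n \<in> S" unfolding local_E_def by blast
      have pn: "p!n \<notin> F" using Vcorr[OF subsetD[OF VsV n(2)]] .
      have SX: "(p!n, S) \<in> SPD i t" using S(1) unfolding X_def .
      have "S = PD (p!n)" using inv[OF assms(4) SX pn] .
      show ?thesis
      proof (cases "p!Suc n \<in> F")
        case True then show ?thesis using nth_mem[OF n(1)] by blast
      next
        case False
        then have "(p!n, p!Suc n) \<in> ?E"
          using \<open>S = PD (p!n)\<close> S n VsV Vcorr
          unfolding safe_E_def G_di_edges_def safe_V_def by auto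
        moreover have "p!Suc n \<in> ?V - Vs" using False n by (simp add: safe_V_def)
        moreover have "\<forall>u\<in>Vs. \<forall>v\<in>?V - Vs. (u, v) \<notin> ?E"
          using sink unfolding sink_comp_def by (rule conjunct2)
        ultimately show ?thesis using n(2) by blast
      qed
    qed
    define g where "g p = (SOME b. b \<in> set p \<and> b \<in> F)" for p
    have g: "\<And>p. p \<in> Ps \<Longrightarrow> g p \<in> set p \<and> g p \<in> F"
      unfolding g_def by (rule someI_ex[OF ex])
    have "inj_on g Ps"
    proof (rule inj_onI)
      fix p q assume pq: "p \<in> Ps" "q \<in> Ps" "g p = g q"
      show "p = q"
      proof (rule ccontr)
        assume "p \<noteq> q"
        then have "set p \<inter> set q = {}" using dj pq(1,2) by blast
        moreover have "g p \<in> set p" "g q \<in> set q" using g pq(1,2) by auto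
        ultimately show False using pq(3) by auto
      qed
    qed
    moreover have "g ` Ps \<subseteq> F" using g by blast
    ultimately have "card Ps \<le> card F"
      by (metis card_inj_on_le finite)
    then show False using cP assms(1) by linarith
  qed
  have "core_wait_cond PD i X"
    unfolding core_wait_cond_def Let_def
    using Rrec kapL noconn by blast
  then show ?thesis unfolding X_def by blast
qed

end
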